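(* Let $A$ be a finite dimensional algebra with a regular $(\mathbb{Z}_2\times\mathbb{Z}_2)$-grading with bicharacter $\beta$, and assume that $A_{(0,0)}=K$. Then there exists a 2-cocycle $\alpha\in H^2(\mathbb{Z}_2\times\mathbb{Z}_2,K^{*})$ inducing $\beta$ such that $A\cong K^{\alpha}(\mathbb{Z}_2\times\mathbb{Z}_2)$ as $(\mathbb{Z}_2\times\mathbb{Z}_2)$-graded algebras.
   Context: All algebras are associative with unit over an algebraically closed field $K$ of characteristic $0$. For a finite abelian group $G$ (written additively, neutral element $0$), a $G$-grading on $A$ is a vector space decomposition $A=\bigoplus_{g\in G}A_g$ with $A_gA_h\subseteq A_{g+h}$. A $G$-graded algebra $A$ has a regular grading if (i) for every $n\in\mathbb{N}$ and every $(g_1,\dots,g_n)\in G^n$ there exist $a_i\in A_{g_i}$ with $a_1\cdots a_n\neq 0$, and (ii) there is a function $\beta\colon G\times G\to K^{*}$ with $a_ga_h=\beta(g,h)a_ha_g$ for all $g,h\in G$, $a_g\in A_g$, $a_h\in A_h$; $\beta$ is then a bicharacter ($\beta(g,h)=\beta(h,g)^{-1}$, multiplicative in each argument), called the bicharacter of $A$. For a 2-cocycle $\alpha\colon G\times G\to K^*$ (i.e. $\alpha(g,h+k)\alpha(h,k)=\alpha(g+h,k)\alpha(g,h)$), the twisted group algebra $K^{\alpha}G$ has basis $\{X_g: g\in G\}$ with $X_gX_h=\alpha(g,h)X_{g+h}$, $G$-graded by $(K^\alpha G)_g=KX_g$. We say $\alpha$ induces $\beta$ if $\beta(g,h)=\alpha(g,h)\alpha(h,g)^{-1}$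 for all $g,h$. *)

theory Defs
  imports Main "HOL-Library.Z2" "HOL-Library.Product_Plus" "HOL-Library.Function_Algebras" "HOL-Computational_Algebra.Polynomial"
begin

instance bit :: finite
proof
  have "(UNIV :: bit set) = {0, 1}" by (auto intro: bit.exhaust)
  then show "finite (UNIV :: bit set)" by (metis finite.emptyI finite_insert)
qed

type_synonym G4 = "bit \<times> bit"

definition alg_closed :: "'k::field itself \<Rightarrow> bool" where
  "alg_closed _ \<longleftrightarrow> (\<forall>p :: 'k poly. degree p > 0 \<longrightarrow> (\<exists>x. poly p x = 0))"

definition is_algebra :: "('k::field \<Rightarrow> 'a::ring_1 \<Rightarrow> 'a) \<Rightarrow> bool" where
  "is_algebra scale \<longleftrightarrow> Vector_Spaces.vector_space scale \<and>
     (\<forall>c x y. scale c (x * y) = scale c x * y \<and> scale c (x * y) = x * scale c y)"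

definition fin_dim :: "('k::field \<Rightarrow> 'a::ab_group_add \<Rightarrow> 'a) \<Rightarrow> bool" where
  "fin_dim scale \<longleftrightarrow> (\<exists>B. finite B \<and> module.span scale B = UNIV)"

definition is_grading :: "('k::field \<Rightarrow> 'a::ring_1 \<Rightarrow> 'a) \<Rightarrow> ('g::{finite,ab_group_add} \<Rightarrow> 'a set) \<Rightarrow> bool" where
  "is_grading scale Ac \<longleftrightarrow>
     (\<forall>g. module.subspace scale (Ac g)) \<and>
     (\<forall>x. \<exists>!f. (\<forall>g. f g \<in> Ac g) \<and> x = (\<Sum>g\<in>UNIV. f g)) \<and>
     (\<forall>g h a b. a \<in> Ac g \<longrightarrow> b \<in> Ac h \<longrightarrow> a * b \<in> Ac (g + h))"

definition regular_grading :: "('g::{finite,ab_group_add} \<Rightarrow> 'a::ring_1 set) \<Rightarrow> ('g \<Rightarrow> 'g \<Rightarrow> 'k::field) \<Rightarrow> bool" where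
  "regular_grading Ac \<beta> \<longleftrightarrow>
     (\<forall>gs :: 'g list. \<exists>as. length as = length gs \<and> (\<forall>i<length gs. as ! i \<in> Ac (gs ! i))
                          \<and> prod_list as \<noteq> 0) \<and>
     (\<forall>g h. \<beta> g h \<noteq> 0) "

definition has_bicharacter :: "('k::field \<Rightarrow> 'a::ring_1 \<Rightarrow> 'a) \<Rightarrow> ('g::{finite,ab_group_add} \<Rightarrow> 'a set) \<Rightarrow> ('g \<Rightarrow> 'g \<Rightarrow> 'k) \<Rightarrow> bool" where
  "has_bicharacter scale Ac \<beta> \<longleftrightarrow>
     (\<forall>g h a b. a \<in> Ac g \<longrightarrow> b \<in> Ac h \<longrightarrow> a * b = scale (\<beta> g h) (b * a))"

definition two_cocycle :: "('g::ab_group_add \<Rightarrow> 'g \<Rightarrow> 'k::field) \<Rightarrow> bool" where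
  "two_cocycle \<alpha> \<longleftrightarrow> (\<forall>g h. \<alpha> g h \<noteq> 0) \<and>
     (\<forall>g h k. \<alpha> g (h + k) * \<alpha> h k = \<alpha> (g + h) k * \<alpha> g h)"

definition induces :: "('g \<Rightarrow> 'g \<Rightarrow> 'k::field) \<Rightarrow> ('g \<Rightarrow> 'g \<Rightarrow> 'k) \<Rightarrow> bool" where
  "induces \<alpha> \<beta> \<longleftrightarrow> (\<forall>g h. \<beta> g h = \<alpha> g h / \<alpha> h g)"

text \<open>Twisted group algebra K^alpha G, realized on functions G => K:
  u corresponds to sum_g u(g) X_g, with X_g X_h = alpha(g,h) X_(g+h).\<close>
definition tw_scale :: "'k::field \<Rightarrow> ('g \<Rightarrow> 'k) \<Rightarrow> ('g \<Rightarrow> 'k)" where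
  "tw_scale c u = (\<lambda>g. c * u g)"

definition tw_mult :: "('g::{finite,ab_group_add} \<Rightarrow> 'g \<Rightarrow> 'k::field) \<Rightarrow> ('g \<Rightarrow> 'k) \<Rightarrow> ('g \<Rightarrow> 'k) \<Rightarrow> ('g \<Rightarrow> 'k)" where
  "tw_mult \<alpha> u v = (\<lambda>k. \<Sum>g\<in>UNIV. \<alpha> g (k - g) * u g * v (k - g))"

definition tw_comp :: "'g \<Rightarrow> ('g \<Rightarrow> 'k::field) set" where
  "tw_comp g = {u. \<forall>h. h \<noteq> g \<longrightarrow> u h = 0}"

definition graded_iso_twisted ::
  "('k::field \<Rightarrow> 'a::ring_1 \<Rightarrow> 'a) \<Rightarrow> ('g::{finite,ab_group_add} \<Rightarrow> 'a set) \<Rightarrow> ('g \<Rightarrow> 'g \<Rightarrow> 'k) \<Rightarrow> ('a \<Rightarrow> ('g \<Rightarrow> 'k)) \<Rightarrow> bool" where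
  "graded_iso_twisted scale Ac \<alpha> \<phi> \<longleftrightarrow>
     Vector_Spaces.linear scale tw_scale \<phi> \<and> bij \<phi> \<and>
     (\<forall>x y. \<phi> (x * y) = tw_mult \<alpha> (\<phi> x) (\<phi> y)) \<and>
     (\<forall>g. \<phi> ` Ac g = tw_comp g)"

end

theory Submission
  imports Defs
begin

locale gsetup =
  fixes scale :: "'k::field \<Rightarrow> 'a::ring_1 \<Rightarrow> 'a"
    and Ac :: "G4 \<Rightarrow> 'a set"
    and \<beta> :: "G4 \<Rightarrow> G4 \<Rightarrow> 'k"
  assumes vs: "vector_space scale"
    and alg1: "\<And>c x y. scale c (x * y) = scale c x * y"
    and alg2: "\<And>c x y. scale c (x * y) = x * scale c y"
    and sub: "\<And>g. module.subspace scale (Ac g)"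
    and dec: "\<And>x. \<exists>!f. (\<forall>g. f g \<in> Ac g) \<and> x = (\<Sum>g\<in>UNIV. f g)"
    and mul: "\<And>g h a b. a \<in> Ac g \<Longrightarrow> b \<in> Ac h \<Longrightarrow> a * b \<in> Ac (g + h)"
    and reg: "\<And>gs :: G4 list. \<exists>as. length as = length gs \<and> (\<forall>i<length gs. as ! i \<in> Ac (gs ! i))
                          \<and> prod_list as \<noteq> 0"
    and bnz: "\<And>g h. \<beta> g h \<noteq> 0"
    and bic: "\<And>g h a b. a \<in> Ac g \<Longrightarrow> b \<in> Ac h \<Longrightarrow> a * b = scale (\<beta> g h) (b * a)"
    and A0: "Ac 0 = range (\<lambda>c. scale c 1)"
begin

interpretation V: vector_space scale by (rule vs)

lemma one_nz: "(1::'a) \<noteq> 0"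
  using reg[of "[]"] by auto

lemma unit_ex: "\<exists>x y. x \<in> Ac g \<and> y \<in> Ac (-g) \<and> x * y = 1 \<and> y * x = 1"
proof -
  obtain as where as: "length as = 2" "as ! 0 \<in> Ac g" "as ! 1 \<in> Ac (-g)" "prod_list as \<noteq> 0"
  proof -
    obtain as where h: "length as = 2" "\<forall>i<2. as ! i \<in> Ac ([g, -g] ! i)" "prod_list as \<noteq> 0"
      using reg[of "[g, -g]"] by (metis length_Cons list.size(3) numeral_2_eq_2)
    have "as ! 0 \<in> Ac g" using h(2) by (metis nth_Cons_0 zero_less_numeral)
    moreover have "as ! 1 \<in> Ac (-g)" using h(2) by (metis One_nat_def nth_Cons_0 nth_Cons_Suc one_less_numeral_iff semiring_norm(76))
    ultimately show ?thesis using h that by blast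
  qed
  then obtain a b where ab: "as = [a, b]"
    by (metis (no_types, opaque_lifting) One_nat_def Suc_1 length_0_conv length_Suc_conv)
  have a: "a \<in> Ac g" and b: "b \<in> Ac (-g)" and nz: "a * b \<noteq> 0" using as ab by auto
  have "a * b \<in> Ac 0" using mul[OF a b] by simp
  then obtain c where c: "a * b = scale c 1" using A0 by auto
  have cnz: "c \<noteq> 0" using nz c by auto
  have "b * a \<in> Ac 0" using mul[OF b a] by simp
  then obtain d where d: "b * a = scale d 1" using A0 by auto
  have dnz: "d \<noteq> 0" using bic[OF a b] nz d by auto
  define y where "y = scale (inverse c) b"
  define z where "z = scale (inverse d) b"
  have xy: "a * y = 1" unfolding y_def using c cnz by (simp add: alg2[symmetric])
  have zx: "z * a = 1" unfolding z_def using d dnz by (simp add: alg1[symmetric])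
  have "z = y" by (metis xy zx mult.assoc mult_1_left mult_1_right)
  moreover have "y \<in> Ac (-g)" unfolding y_def using sub b V.subspace_scale by blast
  ultimately show ?thesis using a xy zx by blast
qed

definition X where "X g = (SOME x. \<exists>y. x \<in> Ac g \<and> y \<in> Ac (-g) \<and> x * y = 1 \<and> y * x = 1)"
definition Y where "Y g = (SOME y. X g \<in> Ac g \<and> y \<in> Ac (-g) \<and> X g * y = 1 \<and> y * X g = 1)"

lemma XY: "X g \<in> Ac g" "Y g \<in> Ac (-g)" "X g * Y g = 1" "Y g * X g = 1"
proof -
  have "\<exists>y. X g \<in> Ac g \<and> y \<in> Ac (-g) \<and> X g * y = 1 \<and> y * X g = 1"
    unfolding X_def using unit_ex[of g] by (rule someI_ex)
  then have "X g \<in> Ac g \<and> Y g \<in> Ac (-g) \<and> X g * Y g = 1 \<and> Y g * X g = 1"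
    unfolding Y_def by (rule someI_ex)
  then show "X g \<in> Ac g" "Y g \<in> Ac (-g)" "X g * Y g = 1" "Y g * X g = 1" by auto
qed

lemma X_nz: "X g \<noteq> 0" using XY(3)[of g] one_nz by auto

lemma coeff_unique: "scale c (X g) = scale d (X g) \<Longrightarrow> c = d"
proof -
  assume "scale c (X g) = scale d (X g)"
  then have "scale (c - d) (X g) = 0" by (simp add: V.scale_left_diff_distrib)
  then show "c = d" using X_nz by simp
qed

lemma in_Ac: "a \<in> Ac g \<Longrightarrow> \<exists>c. a = scale c (X g)"
proof -
  assume a: "a \<in> Ac g"
  have "a * Y g \<in> Ac 0" using mul[OF a XY(2)[of g]] by simp
  then obtain c where c: "a * Y g = scale c 1" using A0 by auto
  have "a = a * Y g * X g" by (simp add: mult.assoc XY(4))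
  also have "\<dots> = scale c (X g)" using c by (simp add: alg1[symmetric])
  finally show ?thesis by blast
qed

lemma scale_X_in: "scale c (X g) \<in> Ac g"
  using sub XY(1) V.subspace_scale by blast

definition \<alpha> where "\<alpha> g h = (SOME c. X g * X h = scale c (X (g + h)))"

lemma alpha_eq: "X g * X h = scale (\<alpha> g h) (X (g + h))"
  unfolding \<alpha>_def using in_Ac[OF mul[OF XY(1) XY(1)], of g h] by (rule someI_ex)

lemma XX_nz: "X g * X h \<noteq> 0"
proof
  assume "X g * X h = 0"
  then have "X g * X h * Y h * Y g = 0" by simp
  moreover have "X g * X h * Y h * Y g = 1" by (simp add: mult.assoc XY(3) flip: mult.assoc[of "X g"])
  ultimately show False using one_nz by simp
qed

lemma alpha_nz: "\<alpha> g h \<noteq> 0"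
  using XX_nz[of g h] alpha_eq[of g h] by auto

lemma cocycle: "\<alpha> g (h + k) * \<alpha> h k = \<alpha> (g + h) k * \<alpha> g h"
proof -
  have "X g * X h * X k = scale (\<alpha> (g + h) k * \<alpha> g h) (X (g + h + k))"
    by (simp add: alpha_eq alg1[symmetric] mult.commute)
  moreover have "X g * (X h * X k) = scale (\<alpha> g (h + k) * \<alpha> h k) (X (g + h + k))"
    by (simp add: alpha_eq alg2[symmetric] mult.commute add.assoc)
  ultimately show ?thesis by (metis coeff_unique mult.assoc)
qed

lemma induce: "\<beta> g h = \<alpha> g h / \<alpha> h g"
proof -
  have "X g * X h = scale (\<beta> g h) (X h * X g)" by (rule bic[OF XY(1) XY(1)])
  then have "scale (\<alpha> g h) (X (g + h)) = scale (\<beta> g h * \<alpha> h g) (X (g + h))"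
    by (simp add: alpha_eq add.commute)
  then have "\<alpha> g h = \<beta> g h * \<alpha> h g" by (rule coeff_unique)
  then show ?thesis using alpha_nz[of h g] by simp
qed

definition \<psi> :: "(G4 \<Rightarrow> 'k) \<Rightarrow> 'a" where "\<psi> u = (\<Sum>g\<in>UNIV. scale (u g) (X g))"

lemma psi_inj: "\<psi> u = \<psi> v \<Longrightarrow> u = v"
proof -
  assume e: "\<psi> u = \<psi> v"
  define f1 where "f1 = (\<lambda>g. scale (u g) (X g))"
  define f2 where "f2 = (\<lambda>g. scale (v g) (X g))"
  have P1: "(\<forall>g. f1 g \<in> Ac g) \<and> \<psi> u = (\<Sum>g\<in>UNIV. f1 g)"
    unfolding f1_def \<psi>_def by (simp add: scale_X_in)
  have P2: "(\<forall>g. f2 g \<in> Ac g) \<and> \<psi> u = (\<Sum>g\<in>UNIV. f2 g)"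
    unfolding f2_def e unfolding \<psi>_def by (simp add: scale_X_in)
  obtain f where "\<forall>y. (\<forall>g. y g \<in> Ac g) \<and> \<psi> u = (\<Sum>g\<in>UNIV. y g) \<longrightarrow> y = f"
    using dec[of "\<psi> u"] by (rule ex1E) simp
  then have "f1 = f" "f2 = f" using P1 P2 by simp_all
  then have "(\<lambda>g. scale (u g) (X g)) = (\<lambda>g. scale (v g) (X g))" unfolding f1_def f2_def by simp
  then show "u = v" using coeff_unique by (metis ext)
qed

lemma psi_surj: "\<exists>u. \<psi> u = x"
proof -
  obtain f where f: "\<forall>g. f g \<in> Ac g" "x = (\<Sum>g\<in>UNIV. f g)" using dec[of x] by blast
  have "\<forall>g. \<exists>c. f g = scale c (X g)" using f(1) in_Ac by blast
  then obtain u where "\<forall>g. f g = scale (u g) (X g)" by metis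
  then have "f = (\<lambda>g. scale (u g) (X g))" by (simp add: fun_eq_iff)
  then show ?thesis unfolding \<psi>_def f(2) by blast
qed

lemma psi_add: "\<psi> (u + v) = \<psi> u + \<psi> v"
  unfolding \<psi>_def by (simp add: V.scale_left_distrib sum.distrib)

lemma psi_scale: "\<psi> (tw_scale c u) = scale c (\<psi> u)"
  unfolding \<psi>_def tw_scale_def by (simp add: V.scale_sum_right)

lemma bit_self: "(x::bit) + x = 0"
  by (cases x) simp_all

lemma G4_self0: "(g::G4) + g = 0"
proof -
  have "fst (g + g) = 0" "snd (g + g) = 0" by (simp_all only: fst_add snd_add bit_self)
  then show ?thesis by (simp add: prod_eq_iff)
qed

lemma G4_self: "(g::G4) + (g + h) = h"
  by (simp only: add.assoc[symmetric] G4_self0 add_0_left)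

lemma reidx: "(\<Sum>k\<in>UNIV. F k) = (\<Sum>h\<in>(UNIV::G4 set). F (g + h))"
  by (rule sum.reindex_bij_witness[of _ "\<lambda>k. k - g" "\<lambda>h. g + h"]) (auto simp: G4_self)

lemma term_eq: "scale c (X g) * scale d (X h) = scale (\<alpha> g h * c * d) (X (g + h))"
proof -
  have "scale c (X g) * scale d (X h) = scale c (scale d (X g * X h))"
    apply (simp only: alg1[symmetric] alg2[symmetric])
    by (rule V.scale_left_commute)
  also have "\<dots> = scale (\<alpha> g h * c * d) (X (g + h))"
    by (simp add: alpha_eq mult_ac)
  finally show ?thesis .
qed

lemma psi_mult: "\<psi> (tw_mult \<alpha> u v) = \<psi> u * \<psi> v"
proof -
  have "\<psi> u * \<psi> v = (\<Sum>g\<in>UNIV. \<Sum>h\<in>UNIV. scale (u g) (X g) * scale (v h) (X h))"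
    unfolding \<psi>_def by (rule sum_product)
  also have "\<dots> = (\<Sum>g\<in>UNIV. \<Sum>h\<in>UNIV. scale (\<alpha> g h * u g * v h) (X (g + h)))"
    by (simp only: term_eq)
  also have "\<dots> = (\<Sum>g\<in>UNIV. \<Sum>k\<in>UNIV. scale (\<alpha> g (k - g) * u g * v (k - g)) (X k))"
  proof (rule sum.cong[OF refl])
    fix g
    show "(\<Sum>h\<in>UNIV. scale (\<alpha> g h * u g * v h) (X (g + h))) = (\<Sum>k\<in>UNIV. scale (\<alpha> g (k - g) * u g * v (k - g)) (X k))"
      using reidx[of "\<lambda>k. scale (\<alpha> g (k - g) * u g * v (k - g)) (X k)" g] by simp
  qed
  also have "\<dots> = (\<Sum>k\<in>UNIV. \<Sum>g\<in>UNIV. scale (\<alpha> g (k - g) * u g * v (k - g)) (X k))"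
    by (rule sum.swap)
  also have "\<dots> = \<psi> (tw_mult \<alpha> u v)"
    unfolding \<psi>_def tw_mult_def by (simp add: V.scale_sum_left)
  finally show ?thesis by simp
qed

lemma tw_vs: "vector_space (tw_scale :: 'k \<Rightarrow> (G4 \<Rightarrow> 'k) \<Rightarrow> _)"
  by unfold_locales (auto simp: tw_scale_def fun_eq_iff algebra_simps)

lemma psi_comp: "\<psi> ` tw_comp g = Ac g"
proof
  have *: "\<psi> u = scale (u g) (X g)" if "u \<in> tw_comp g" for u
  proof -
    have "\<psi> u = (\<Sum>h\<in>UNIV. if h = g then scale (u g) (X g) else 0)"
      unfolding \<psi>_def by (rule sum.cong) (use that in \<open>auto simp: tw_comp_def\<close>)
    then show ?thesis by simp
  qed
  show "\<psi> ` tw_comp g \<subseteq> Ac g"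
  proof clarify
    fix u :: "G4 \<Rightarrow> 'k" assume "u \<in> tw_comp g"
    then show "\<psi> u \<in> Ac g" using *[of u] scale_X_in by simp
  qed
  show "Ac g \<subseteq> \<psi> ` tw_comp g"
  proof
    fix a assume "a \<in> Ac g"
    then obtain c where c: "a = scale c (X g)" using in_Ac by blast
    let ?u = "\<lambda>h. if h = g then c else 0"
    have "?u \<in> tw_comp g" by (simp add: tw_comp_def)
    moreover have "\<psi> ?u = a" using *[OF \<open>?u \<in> tw_comp g\<close>] c by simp
    ultimately show "a \<in> \<psi> ` tw_comp g" by blast
  qed
qed

lemma iso: "graded_iso_twisted scale Ac \<alpha> (inv \<psi>)"
proof -
  have bij: "bij \<psi>" using psi_inj psi_surj by (metis bijI injI surjI)
  have l: "inv \<psi> (\<psi> u) = u" for u using bij by (simp add: bij_is_inj)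
  have r: "\<psi> (inv \<psi> x) = x" for x using bij by (simp add: bij_is_surj surj_f_inv_f)
  have lin: "Vector_Spaces.linear scale tw_scale (inv \<psi>)"
  proof (rule iffD2[OF Vector_Spaces.linear_iff], intro conjI allI)
    show "vector_space scale" by (rule vs)
    show "vector_space (tw_scale :: 'k \<Rightarrow> (G4 \<Rightarrow> 'k) \<Rightarrow> _)" by (rule tw_vs)
    fix x y c
    have "x + y = \<psi> (inv \<psi> x + inv \<psi> y)" by (simp only: psi_add r)
    then show "inv \<psi> (x + y) = inv \<psi> x + inv \<psi> y" by (simp only: l)
    have "scale c x = \<psi> (tw_scale c (inv \<psi> x))" by (simp only: psi_scale r)
    then show "inv \<psi> (scale c x) = tw_scale c (inv \<psi> x)" by (simp only: l)
  qed
  have m: "inv \<psi> (x * y) = tw_mult \<alpha> (inv \<psi> x) (inv \<psi> y)" for x y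
  proof -
    have "x * y = \<psi> (tw_mult \<alpha> (inv \<psi> x) (inv \<psi> y))" by (simp only: psi_mult r)
    then show ?thesis by (simp only: l)
  qed
  have c: "inv \<psi> ` Ac g = tw_comp g" for g
  proof -
    have "inv \<psi> ` Ac g = inv \<psi> ` \<psi> ` tw_comp g" by (simp only: psi_comp)
    also have "\<dots> = tw_comp g" by (simp only: image_image l image_ident)
    finally show ?thesis .
  qed
  have bi: "bij (inv \<psi>)" by (rule bij_imp_bij_inv[OF bij])
  show ?thesis unfolding graded_iso_twisted_def
    using lin bi m c by blast
qed

end

theorem mainTheorem1:
  fixes scale :: "'k::field_char_0 \<Rightarrow> 'a::ring_1 \<Rightarrow> 'a"
    and Ac :: "G4 \<Rightarrow> 'a set"
    and \<beta> :: "G4 \<Rightarrow> G4 \<Rightarrow> 'k"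
  assumes "alg_closed TYPE('k)"
    and "is_algebra scale"
    and "fin_dim scale"
    and "is_grading scale Ac"
    and "regular_grading Ac \<beta>"
    and "has_bicharacter scale Ac \<beta>"
    and "Ac 0 = range (\<lambda>c. scale c 1)"
  shows "\<exists>\<alpha> :: G4 \<Rightarrow> G4 \<Rightarrow> 'k. two_cocycle \<alpha> \<and> induces \<alpha> \<beta> \<and>
           (\<exists>\<phi>. graded_iso_twisted scale Ac \<alpha> \<phi>)"
proof -
  note a = assms(2)[unfolded is_algebra_def]
  note g = assms(4)[unfolded is_grading_def]
  note r = assms(5)[unfolded regular_grading_def]
  note b = assms(6)[unfolded has_bicharacter_def]
  interpret gsetup scale Ac \<beta>
  proof (rule gsetup.intro)
    show "vector_space scale" by (rule a[THEN conjunct1])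
    show "\<And>c x y. scale c (x * y) = scale c x * y" by (rule a[THEN conjunct2, rule_format, THEN conjunct1])
    show "\<And>c x y. scale c (x * y) = x * scale c y" by (rule a[THEN conjunct2, rule_format, THEN conjunct2])
    show "\<And>g. module.subspace scale (Ac g)" by (rule g[THEN conjunct1, rule_format])
    show "\<And>x. \<exists>!f. (\<forall>g. f g \<in> Ac g) \<and> x = (\<Sum>g\<in>UNIV. f g)"
      by (rule g[THEN conjunct2, THEN conjunct1, rule_format])
    show "\<And>g h a b. a \<in> Ac g \<Longrightarrow> b \<in> Ac h \<Longrightarrow> a * b \<in> Ac (g + h)"
      by (rule g[THEN conjunct2, THEN conjunct2, rule_format])
    show "\<And>gs :: G4 list. \<exists>as. length as = length gs \<and> (\<forall>i<length gs. as ! i \<in> Ac (gs ! i)) \<and> prod_list as \<noteq> 0"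
      by (rule r[THEN conjunct1, rule_format])
    show "\<And>g h. \<beta> g h \<noteq> 0" by (rule r[THEN conjunct2, rule_format])
    show "\<And>g h a b. a \<in> Ac g \<Longrightarrow> b \<in> Ac h \<Longrightarrow> a * b = scale (\<beta> g h) (b * a)"
      by (rule b[rule_format])
    show "Ac 0 = range (\<lambda>c. scale c 1)" by (rule assms(7))
  qed
  have "two_cocycle \<alpha>" unfolding two_cocycle_def using alpha_nz cocycle by simp
  moreover have "induces \<alpha> \<beta>" unfolding induces_def using induce by simp
  ultimately show ?thesis using iso by blast
qed

end
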